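(* The Fermat–Torricelli problem for four non-coplanar points forming a tetrahedron in $\mathbb{R}^3$ is not in general solvable by Euclidean (straightedge-and-compass) constructions: there exist tetrahedra $A_1A_2A_3A_4$ in $\mathbb{R}^3$ whose Fermat–Torricelli point $A_0$ (the minimizer of $\sum_{i=1}^4\|A_0-A_i\|$) cannot be constructed from the vertices by a Euclidean construction, i.e. (for vertices with rational coordinates) some coordinate of $A_0$ is not a constructible number over $\mathbb{Q}$.
   Context: A real number is constructible over $\mathbb{Q}$ if it lies in a field obtained from $\mathbb{Q}$ by a finite tower of quadratic extensions; a point is constructible by Euclidean constructions from given points with rational coordinates exactly when its coordinates are constructible numbers. The Fermat–Torricelli point of four points $A_1,\dots,A_4\in\mathbb{R}^3$ is the unique minimizer over $A_0\in\mathbb{R}^3$ of $\sum_{i=1}^4\|A_0-A_i\|$. *)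

theory Defs
  imports "HOL-Analysis.Analysis"
begin

definition real_subfield :: "real set \<Rightarrow> bool" where
  "real_subfield F \<longleftrightarrow> 0 \<in> F \<and> 1 \<in> F \<and>
     (\<forall>x\<in>F. \<forall>y\<in>F. x + y \<in> F \<and> x - y \<in> F \<and> x * y \<in> F) \<and>
     (\<forall>x\<in>F. inverse x \<in> F)"

definition quadratic_ext :: "real set \<Rightarrow> real set \<Rightarrow> bool" where
  "quadratic_ext F K \<longleftrightarrow>
     (\<exists>s. s\<^sup>2 \<in> F \<and> s \<notin> F \<and> K = {a + b * s | a b. a \<in> F \<and> b \<in> F})"

definition constructible :: "real \<Rightarrow> bool" where
  "constructible x \<longleftrightarrow>
     (\<exists>Fs :: real set list. Fs \<noteq> [] \<and> hd Fs = \<rat> \<and>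
        (\<forall>i. Suc i < length Fs \<longrightarrow> real_subfield (Fs ! i) \<and> quadratic_ext (Fs ! i) (Fs ! Suc i)) \<and>
        x \<in> last Fs)"

definition is_FT_point :: "real^3 \<Rightarrow> real^3 \<Rightarrow> real^3 \<Rightarrow> real^3 \<Rightarrow> real^3 \<Rightarrow> bool" where
  "is_FT_point A1 A2 A3 A4 A0 \<longleftrightarrow>
     (\<forall>X. norm (A0 - A1) + norm (A0 - A2) + norm (A0 - A3) + norm (A0 - A4)
          \<le> norm (X - A1) + norm (X - A2) + norm (X - A3) + norm (X - A4))"

end

theory Submission imports Defs begin


lemma core:
  fixes y z d D3 D4 :: real
  assumes dpos: "d > 0" and D3pos: "D3 > 0" and D4pos: "D4 > 0"
    and hd: "d^2 = 4 + y^2 + z^2" and h3: "D3^2 = y^2 + (z-2)^2" and h4: "D4^2 = (y-1)^2 + z^2"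
    and fy: "2*y/d + y/D3 + (y-1)/D4 = 0" and fz: "2*z/d + (z-2)/D3 + z/D4 = 0"
  shows "z^3 - 6*z^2 + 13*z - 4 = 0"
proof -
  define p1 where "p1 = y/D3"
  define p2 where "p2 = (z-2)/D3"
  define q1 where "q1 = (y-1)/D4"
  define q2 where "q2 = z/D4"
  define e where "e = d/2"
  have epos: "e > 0" using dpos e_def by simp
  have he: "4*e^2 = 4 + y^2 + z^2" using hd unfolding e_def by (simp add: power_divide)
  have zpos: "z > 0"
  proof (rule ccontr)
    assume "\<not> z > 0"
    hence "2*z/d \<le> 0" "z/D4 \<le> 0" "(z-2)/D3 < 0" using dpos D3pos D4pos
      by (auto simp: divide_nonpos_pos divide_neg_pos)
    with fz show False by linarith
  qed
  have hp: "p1^2 + p2^2 = 1"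
  proof -
    have "p1^2 + p2^2 = (y^2 + (z-2)^2)/D3^2" unfolding p1_def p2_def by (simp add: power_divide add_divide_distrib)
    also have "\<dots> = D3^2/D3^2" by (simp only: h3)
    finally show ?thesis using D3pos by simp
  qed
  have hq: "q1^2 + q2^2 = 1"
  proof -
    have "q1^2 + q2^2 = ((y-1)^2 + z^2)/D4^2" unfolding q1_def q2_def by (simp add: power_divide add_divide_distrib)
    also have "\<dots> = D4^2/D4^2" by (simp only: h4)
    finally show ?thesis using D4pos by simp
  qed
  have F1: "y = -e*(p1+q1)"
  proof -
    have "2*y/d = -(p1+q1)" using fy unfolding p1_def q1_def by linarith
    hence "d/2 * (2*y/d) = d/2 * (-(p1+q1))" by (simp only:)
    moreover have "y = d/2 * (2*y/d)" using dpos by simp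
    ultimately show ?thesis unfolding e_def by linarith
  qed
  have F2: "z = -e*(p2+q2)"
  proof -
    have "2*z/d = -(p2+q2)" using fz unfolding p2_def q2_def by linarith
    hence "d/2 * (2*z/d) = d/2 * (-(p2+q2))" by (simp only:)
    moreover have "z = d/2 * (2*z/d)" using dpos by simp
    ultimately show ?thesis unfolding e_def by linarith
  qed
  have c1: "y*p2 - (z-2)*p1 = 0" unfolding p1_def p2_def by (simp add: field_simps)
  have c2: "(y-1)*q2 - z*q1 = 0" unfolding q1_def q2_def by (simp add: field_simps)
  define K where "K = e*(p1*q2 - q1*p2)"
  have K1: "K = -2*p1"
  proof -
    have "(-e*(p1+q1))*p2 - ((-e*(p2+q2))-2)*p1 = 0"
      using c1 F1 F2 by simp
    thus ?thesis unfolding K_def by algebra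
  qed
  have K2: "K = -q2"
  proof -
    have "(-e*(p1+q1) - 1)*q2 - (-e*(p2+q2))*q1 = 0"
      using c2 F1 F2 by simp
    thus ?thesis unfolding K_def by algebra
  qed
  have S1: "q2 = 2*p1" using K1 K2 by simp
  define C where "C = p1*q1 + p2*q2"
  have r1: "y^2+z^2 = e^2*(2+2*C)"
  proof -
    have "y^2 + z^2 = e^2*((p1+q1)^2 + (p2+q2)^2)" using F1 F2 by algebra
    also have "(p1+q1)^2 + (p2+q2)^2 = 2 + 2*C" using hp hq unfolding C_def by algebra
    finally show ?thesis by simp
  qed
  have S2: "e^2*(1-C) = 2" using r1 he by algebra
  have lag: "(p1*q2 - q1*p2)^2 + C^2 = 1"
    using hp hq unfolding C_def by algebra
  have "K^2 = e^2*(p1*q2 - q1*p2)^2" unfolding K_def by algebra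
  hence "4*p1^2 = e^2*(1-C)*(1+C)" using K1 lag by algebra
  hence S3: "C = 2*p1^2 - 1" using S2 by algebra
  define t where "t = p1^2"
  define m where "m = p1*p2"
  have q1sq: "q1^2 = 1 - 4*t" using hq S1 unfolding t_def by algebra
  have p2sq: "p2^2 = 1 - t" using hp unfolding t_def by algebra
  have msq: "m^2 = t*(1-t)" using p2sq unfolding m_def t_def by algebra
  have e1: "p1*q1 = 2*t - 1 - 2*m" using S3 S1 unfolding C_def t_def m_def by algebra
  have e2: "4*t^2 - t + 1 = 4*m*(2*t-1)"
  proof -
    have "(p1*q1)^2 = t*(1-4*t)" using q1sq unfolding t_def by algebra
    hence "(2*t - 1 - 2*m)^2 = t*(1-4*t)" using e1 by simp
    thus ?thesis using msq by algebra
  qed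
  have e3: "(5*t-1)*(16*t^3-24*t^2+13*t-1) = 0"
  proof -
    have "(4*t^2 - t + 1)^2 = 16*m^2*(2*t-1)^2" using e2 by algebra
    thus ?thesis using msq by algebra
  qed
  have "e^2*(1-(2*t-1)) = 2" using S2 S3 unfolding t_def by simp
  hence dsq: "e^2*(1-t) = 1" by (simp add: algebra_simps)
  have zsq: "z^2*(1-t) = 1 + 3*t + 4*m"
  proof -
    have "z^2 = e^2*(p2+2*p1)^2" using F2 S1 by algebra
    moreover have "(p2+2*p1)^2 = 1 - t + 4*m + 4*t" using p2sq unfolding m_def t_def by algebra
    ultimately show ?thesis using dsq by algebra
  qed
  have t0: "t \<ge> 0" unfolding t_def by simp
  have t1: "1 - t \<noteq> 0" using dsq by auto
  have t2: "2*t - 1 \<noteq> 0"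
  proof
    assume "2*t - 1 = 0"
    hence tt: "t = 1/2" by simp
    from e2 show False unfolding tt by (simp add: power2_eq_square)
  qed
  show ?thesis
  proof (cases "5*t - 1 = 0")
    case True
    hence tt: "t = 1/5" by simp
    have "m = -2/5" using e2 unfolding tt by (simp add: power2_eq_square)
    hence "z^2 = 0" using zsq unfolding tt by simp
    thus ?thesis using zpos by simp
  next
    case False
    hence cub: "16*t^3-24*t^2+13*t-1 = 0" using e3 by simp
    have "(1-t)*(2*t-1)*(z^2 - (4*t)^2) = 0"
      using zsq e2 cub by algebra
    hence "z^2 = (4*t)^2" using t1 t2 by simp
    hence "z = 4*t" using zpos t0 by (subst (asm) power2_eq_iff_nonneg) auto
    thus ?thesis using cub by algebra
  qed
qed


definition pc :: "real \<Rightarrow> real" where "pc x = x^3 - 6*x^2 + 13*x - 4"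

lemma sf_add: "real_subfield F \<Longrightarrow> x \<in> F \<Longrightarrow> y \<in> F \<Longrightarrow> x + y \<in> F"
  and sf_diff: "real_subfield F \<Longrightarrow> x \<in> F \<Longrightarrow> y \<in> F \<Longrightarrow> x - y \<in> F"
  and sf_mult: "real_subfield F \<Longrightarrow> x \<in> F \<Longrightarrow> y \<in> F \<Longrightarrow> x * y \<in> F"
  and sf_inv: "real_subfield F \<Longrightarrow> x \<in> F \<Longrightarrow> inverse x \<in> F"
  unfolding real_subfield_def by auto

lemma sf_pow: "real_subfield F \<Longrightarrow> x \<in> F \<Longrightarrow> x ^ n \<in> F"
proof (induction n)
  case 0 thus ?case by (simp add: real_subfield_def)
next
  case (Suc n) thus ?case by (simp add: sf_mult)
qed

lemma sf_num: "\<rat> \<subseteq> F \<Longrightarrow> (numeral n :: real) \<in> F"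
  by (meson Rats_number_of subsetD)

lemma tower_step:
  assumes F: "real_subfield F" and QF: "\<rat> \<subseteq> F" and K: "quadratic_ext F K"
    and x: "x \<in> K" and px: "pc x = 0"
  shows "\<exists>x'\<in>F. pc x' = 0"
proof -
  obtain s where s2: "s^2 \<in> F" and sF: "s \<notin> F" and Kd: "K = {a + b * s | a b. a \<in> F \<and> b \<in> F}"
    using K unfolding quadratic_ext_def by blast
  obtain a b where a: "a \<in> F" and b: "b \<in> F" and xab: "x = a + b * s" using x Kd by blast
  define e where "e = s^2"
  have eF: "e \<in> F" using s2 e_def by simp
  define P where "P = a^3 + 3*a*b^2*e - 6*(a^2+b^2*e) + 13*a - 4"
  define Q where "Q = 3*a^2*b + b^3*e - 12*a*b + 13*b"
  note cl = sf_add[OF F] sf_diff[OF F] sf_mult[OF F] sf_pow[OF F] sf_num[OF QF]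
  have PF: "P \<in> F" unfolding P_def by (intro cl a b eF)
  have QF': "Q \<in> F" unfolding Q_def by (intro cl a b eF)
  have id: "pc x = P + Q * s" unfolding pc_def xab P_def Q_def e_def
    by (simp add: power2_eq_square power3_eq_cube algebra_simps)
  have Q0: "Q = 0"
  proof (rule ccontr)
    assume "Q \<noteq> 0"
    hence "s = - (P * inverse Q)" using px id by (simp add: field_simps)
    moreover have "- (P * inverse Q) \<in> F"
      using cl sf_inv[OF F] PF QF' by (metis diff_0 real_subfield_def F)
    ultimately show False using sF by simp
  qed
  hence P0: "P = 0" using px id by simp
  show ?thesis
  proof (cases "b = 0")
    case True thus ?thesis using a px xab by auto
  next
    case False
    have Q': "3*a^2 + b^2*e - 12*a + 13 = 0"
    proof -
      have "b * (3*a^2 + b^2*e - 12*a + 13) = 0" using Q0 unfolding Q_def by algebra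
      thus ?thesis using False by simp
    qed
    have "pc (6 - 2*a) = 0" unfolding pc_def using P0 Q' unfolding P_def by algebra
    moreover have "6 - 2*a \<in> F" by (intro cl a)
    ultimately show ?thesis by blast
  qed
qed

lemma constructible_root:
  assumes "constructible x" "pc x = 0"
  shows "\<exists>q\<in>\<rat>. pc q = 0"
proof -
  obtain Fs where ne: "Fs \<noteq> []" and hd: "hd Fs = \<rat>"
    and tw: "\<And>i. Suc i < length Fs \<Longrightarrow> real_subfield (Fs ! i) \<and> quadratic_ext (Fs ! i) (Fs ! Suc i)"
    and xl: "x \<in> last Fs"
    using assms(1) unfolding constructible_def by blast
  have F0: "Fs ! 0 = \<rat>" using ne hd by (simp add: hd_conv_nth)
  have QF: "i < length Fs \<Longrightarrow> \<rat> \<subseteq> Fs ! i" for i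
  proof (induction i)
    case 0 thus ?case using F0 by simp
  next
    case (Suc i)
    hence "\<rat> \<subseteq> Fs ! i" by simp
    moreover obtain s where "Fs ! Suc i = {a + b * s | a b. a \<in> Fs ! i \<and> b \<in> Fs ! i}"
      using tw[OF Suc.prems] unfolding quadratic_ext_def by blast
    moreover have "0 \<in> Fs ! i" using tw[OF Suc.prems] unfolding real_subfield_def by blast
    ultimately show ?case by force
  qed
  have main: "i < length Fs \<Longrightarrow> (\<exists>y\<in>Fs ! i. pc y = 0) \<Longrightarrow> \<exists>q\<in>\<rat>. pc q = 0" for i
  proof (induction i)
    case 0 thus ?case using F0 by simp
  next
    case (Suc i)
    have "\<exists>y\<in>Fs ! i. pc y = 0"
      using tower_step[of "Fs ! i" "Fs ! Suc i"] tw[OF Suc.prems(1)] QF[of i] Suc.prems by auto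
    thus ?case using Suc by simp
  qed
  have "last Fs = Fs ! (length Fs - 1)" using ne by (simp add: last_conv_nth)
  thus ?thesis using main[of "length Fs - 1"] ne xl assms(2) by auto
qed

lemma no_rat_root: "q \<in> \<rat> \<Longrightarrow> pc q \<noteq> 0"
proof
  assume q: "q \<in> \<rat>" and p: "pc q = 0"
  obtain a b :: int where b: "b > 0" and cop: "coprime a b" and qd: "q = of_int a / of_int b"
    by (rule Rats_cases'[OF q])
  have h: "real_of_int (a^3 - 6*a^2*b + 13*a*b^2 - 4*b^3) = of_int b ^ 3 * pc q"
    unfolding pc_def qd using b by (simp add: field_simps power3_eq_cube power2_eq_square)
  have "real_of_int (a^3 - 6*a^2*b + 13*a*b^2 - 4*b^3) = 0" by (simp only: h p mult_zero_right)
  hence eq: "a^3 - 6*a^2*b + 13*a*b^2 - 4*b^3 = 0" by (simp only: of_int_eq_0_iff)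
  hence "a^3 = b * (6*a^2 - 13*a*b + 4*b^2)" by (simp add: algebra_simps power2_eq_square power3_eq_cube)
  hence "b dvd a^3" by simp
  hence "is_unit b" using cop by (metis coprime_commute coprime_power_right_iff coprime_absorb_right)
  hence b1: "b = 1" using b by simp
  hence "a^3 - 6*a^2 + 13*a - 4 = 0" using eq by simp
  moreover have "a^3 - 6*a^2 + 13*a - 4 \<noteq> (0::int)"
  proof (cases "a \<le> 0")
    case True
    have "a*a \<ge> 0" by simp
    hence "a*a*a \<le> 0" using True by (simp add: mult_nonneg_nonpos)
    moreover have "a*a \<ge> 0" by simp
    ultimately have "a*a*a - 6*(a*a) + 13*a - 4 < 0" using True by linarith
    hence "a^3 - 6*a^2 + 13*a - 4 < 0" by (simp add: power2_eq_square power3_eq_cube)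
    thus ?thesis by simp
  next
    case False
    have "a^3 - 6*a^2 + 13*a - 4 = (a-1)*((a-2)*(a-3) + 2) + 4" by (simp add: power2_eq_square power3_eq_cube algebra_simps)
    moreover have "(a-2)*(a-3) \<ge> 0"
      by (cases "a \<le> 2") (auto intro: mult_nonpos_nonpos mult_nonneg_nonneg)
    hence "(a-1)*((a-2)*(a-3) + 2) \<ge> 0" using False by simp
    ultimately show ?thesis by linarith
  qed
  ultimately show False by simp
qed



lemma rank2: "(a1*P1+b1*Q1)*((a2*P2+b2*Q2)*(a3*P3+b3*Q3) - (a2*P3+b2*Q3)*(a3*P2+b3*Q2))
  - (a1*P2+b1*Q2)*((a2*P1+b2*Q1)*(a3*P3+b3*Q3) - (a2*P3+b2*Q3)*(a3*P1+b3*Q1))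
  + (a1*P3+b1*Q3)*((a2*P1+b2*Q1)*(a3*P2+b3*Q2) - (a2*P2+b2*Q2)*(a3*P1+b3*Q1)) = (0::real)"
  by (simp add: algebra_simps)

lemma aff_comp:
  fixes u v w x :: "real^3"
  assumes "x \<in> affine hull {u,v,w}"
  shows "\<exists>a b. \<forall>j. x$j = w$j + a*(u$j - w$j) + b*(v$j - w$j)"
proof -
  obtain a b c where "a+b+c = 1" "x = a *\<^sub>R u + b *\<^sub>R v + c *\<^sub>R w"
    using assms unfolding affine_hull_3 by blast
  hence "\<forall>j. x$j = w$j + a*(u$j - w$j) + b*(v$j - w$j)"
  proof -
    have "c = 1 - a - b" using \<open>a+b+c = 1\<close> by simp
    hence x': "x = a *\<^sub>R u + b *\<^sub>R v + (1-a-b) *\<^sub>R w" using \<open>x = _\<close> by simp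
    show ?thesis unfolding x' by (simp add: algebra_simps)
  qed
  thus ?thesis by blast
qed

lemma noncop:
  "\<not> coplanar {vector[2,0,0], vector[-2,0,0], vector[0,0,2], vector[0,1,0] :: real^3}"
proof
  let ?A1 = "vector[2,0,0] :: real^3" and ?A2 = "vector[-2,0,0] :: real^3"
    and ?A3 = "vector[0,0,2] :: real^3" and ?A4 = "vector[0,1,0] :: real^3"
  assume "coplanar {?A1, ?A2, ?A3, ?A4}"
  then obtain u v w where sub: "{?A1, ?A2, ?A3, ?A4} \<subseteq> affine hull {u,v,w}"
    unfolding coplanar_def by blast
  obtain a1 b1 where h1: "\<forall>j. ?A1$j = w$j + a1*(u$j - w$j) + b1*(v$j - w$j)" using aff_comp sub by blast
  obtain a2 b2 where h2: "\<forall>j. ?A2$j = w$j + a2*(u$j - w$j) + b2*(v$j - w$j)" using aff_comp sub by blast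
  obtain a3 b3 where h3: "\<forall>j. ?A3$j = w$j + a3*(u$j - w$j) + b3*(v$j - w$j)" using aff_comp sub by blast
  obtain a4 b4 where h4: "\<forall>j. ?A4$j = w$j + a4*(u$j - w$j) + b4*(v$j - w$j)" using aff_comp sub by blast
  define P1 where "P1 = u$1 - w$1"
  define P2 where "P2 = u$2 - w$2"
  define P3 where "P3 = u$3 - w$3"
  define Q1 where "Q1 = v$1 - w$1"
  define Q2 where "Q2 = v$2 - w$2"
  define Q3 where "Q3 = v$3 - w$3"
  have e11: "(a2-a1)*P1+(b2-b1)*Q1 = -4" using h1[rule_format, of 1] h2[rule_format, of 1] unfolding P1_def Q1_def by (simp add: algebra_simps)
  have e12: "(a2-a1)*P2+(b2-b1)*Q2 = 0" using h1[rule_format, of 2] h2[rule_format, of 2] unfolding P2_def Q2_def by (simp add: algebra_simps)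
  have e13: "(a2-a1)*P3+(b2-b1)*Q3 = 0" using h1[rule_format, of 3] h2[rule_format, of 3] unfolding P3_def Q3_def by (simp add: algebra_simps)
  have e21: "(a3-a1)*P1+(b3-b1)*Q1 = -2" using h1[rule_format, of 1] h3[rule_format, of 1] unfolding P1_def Q1_def by (simp add: algebra_simps)
  have e22: "(a3-a1)*P2+(b3-b1)*Q2 = 0" using h1[rule_format, of 2] h3[rule_format, of 2] unfolding P2_def Q2_def by (simp add: algebra_simps)
  have e23: "(a3-a1)*P3+(b3-b1)*Q3 = 2" using h1[rule_format, of 3] h3[rule_format, of 3] unfolding P3_def Q3_def by (simp add: algebra_simps)
  have e31: "(a4-a1)*P1+(b4-b1)*Q1 = -2" using h1[rule_format, of 1] h4[rule_format, of 1] unfolding P1_def Q1_def by (simp add: algebra_simps)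
  have e32: "(a4-a1)*P2+(b4-b1)*Q2 = 1" using h1[rule_format, of 2] h4[rule_format, of 2] unfolding P2_def Q2_def by (simp add: algebra_simps)
  have e33: "(a4-a1)*P3+(b4-b1)*Q3 = 0" using h1[rule_format, of 3] h4[rule_format, of 3] unfolding P3_def Q3_def by (simp add: algebra_simps)
  note rk = rank2[of "a2-a1" P1 "b2-b1" Q1 "a3-a1" P2 "b3-b1" Q2 "a4-a1" P3 "b4-b1" Q3]
  have "(-4::real)*(0*0 - 2*1) - 0*((-2)*0 - 2*(-2)) + 0*((-2)*1 - 0*(-2)) = 0"
    using rk unfolding e11 e12 e13 e21 e22 e23 e31 e32 e33 .
  thus False by simp
qed



lemma norm3: "norm (x::real^3) = sqrt ((x$1)^2 + (x$2)^2 + (x$3)^2)"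
  by (simp add: norm_eq_sqrt_inner inner_vec_def sum_3 power2_eq_square)

definition fF :: "real \<Rightarrow> real \<Rightarrow> real \<Rightarrow> real" where
  "fF x y z = sqrt ((x-2)^2+y^2+z^2) + sqrt ((x+2)^2+y^2+z^2) + sqrt (x^2+y^2+(z-2)^2) + sqrt (x^2+(y-1)^2+z^2)"

definition ftot :: "real^3 \<Rightarrow> real" where
  "ftot X = norm (X - vector[2,0,0]) + norm (X - vector[-2,0,0]) + norm (X - vector[0,0,2]) + norm (X - vector[0,1,0])"

lemma ftot_fF: "ftot X = fF (X$1) (X$2) (X$3)"
  unfolding ftot_def fF_def by (simp add: norm3)

lemma vec3_eq: "X = (vector[X$1, X$2, X$3] :: real^3)"
  by (smt (verit) exhaust_3 vec_eq_iff vector_3)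

lemma exists_min: "\<exists>M. \<forall>X. ftot M \<le> ftot X"
proof -
  have cont: "continuous_on (cball 0 20) ftot" unfolding ftot_def by (intro continuous_intros)
  obtain M where M: "M \<in> cball 0 20" "\<And>X. X \<in> cball 0 20 \<Longrightarrow> ftot M \<le> ftot X"
    using continuous_attains_inf[OF compact_cball _ cont] by (metis cball_eq_empty empty_iff zero_le_numeral not_less)
  have f0: "ftot 0 = 7" unfolding ftot_fF fF_def by simp
  have "ftot M \<le> ftot X" for X
  proof (cases "X \<in> cball 0 20")
    case True thus ?thesis using M by blast
  next
    case False
    hence nX: "norm X > 20" by (simp add: dist_norm)
    have n1: "norm (vector[2,0,0] :: real^3) = 2" by (simp add: norm3)
    have n2: "norm (vector[-2,0,0] :: real^3) = 2" by (simp add: norm3)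
    have n3: "norm (vector[0,0,2] :: real^3) = 2" by (simp add: norm3)
    have n4: "norm (vector[0,1,0] :: real^3) = 1" by (simp add: norm3)
    have "ftot X \<ge> 4 * norm X - 7"
      unfolding ftot_def using norm_triangle_ineq2[of X "vector[2,0,0]"] norm_triangle_ineq2[of X "vector[-2,0,0]"]
        norm_triangle_ineq2[of X "vector[0,0,2]"] norm_triangle_ineq2[of X "vector[0,1,0]"] n1 n2 n3 n4
      by linarith
    hence "ftot X \<ge> ftot 0" using nX f0 by linarith
    moreover have "ftot M \<le> ftot 0" using M by simp
    ultimately show ?thesis by linarith
  qed
  thus ?thesis by blast
qed

definition refl3 :: "real^3 \<Rightarrow> real^3" where "refl3 X = vector[-(X$1), X$2, X$3]"

lemma ftot_refl: "ftot (refl3 X) = ftot X"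
  unfolding ftot_fF refl3_def fF_def by (simp add: power2_eq_square algebra_simps)

lemma avg4: "(a1::real) \<le> (b1+c1)/2 \<Longrightarrow> a2 \<le> (b2+c2)/2 \<Longrightarrow> a3 \<le> (b3+c3)/2 \<Longrightarrow> a4 \<le> (b4+c4)/2
  \<Longrightarrow> a1+a2+a3+a4 \<le> ((b1+b2+b3+b4) + (c1+c2+c3+c4))/2"
  unfolding add_divide_distrib by linarith

lemma exists_min0: "\<exists>A0. (\<forall>X. ftot A0 \<le> ftot X) \<and> A0$1 = 0"
proof -
  obtain M where M: "\<forall>X. ftot M \<le> ftot X" using exists_min by blast
  define A0 where "A0 = (1/2) *\<^sub>R (M + refl3 M)"
  have nb: "norm (A0 - A) \<le> (norm (M - A) + norm (refl3 M - A))/2" for A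
  proof -
    have "A0 - A = (1/2) *\<^sub>R ((M - A) + (refl3 M - A))" unfolding A0_def by (simp add: vec_eq_iff algebra_simps)
    hence "norm (A0 - A) = (1/2) * norm ((M - A) + (refl3 M - A))" by simp
    moreover have "norm ((M - A) + (refl3 M - A)) \<le> norm (M - A) + norm (refl3 M - A)" by (rule norm_triangle_ineq)
    ultimately show ?thesis by (simp add: field_simps)
  qed
  have "ftot A0 \<le> (ftot M + ftot (refl3 M))/2"
    unfolding ftot_def by (rule avg4[OF nb nb nb nb])
  hence "ftot A0 \<le> ftot M" using ftot_refl by simp
  hence "\<forall>X. ftot A0 \<le> ftot X" using M by (meson order_trans)
  moreover have "A0$1 = 0" unfolding A0_def refl3_def by simp
  ultimately show ?thesis by blast
qed

lemma sqrt_deriv: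
  assumes "c + u^2 > 0"
  shows "((\<lambda>s. sqrt (c + (u+s)^2)) has_real_derivative u / sqrt (c + u^2)) (at 0)"
  using assms by (auto intro!: derivative_eq_intros simp: field_simps)


lemma sq_le: "0 \<le> c \<Longrightarrow> x \<le> c^2 \<Longrightarrow> sqrt x \<le> c"
  using real_sqrt_le_mono[of x "c^2"] by simp

lemma sq_ge: "0 \<le> c \<Longrightarrow> c^2 \<le> x \<Longrightarrow> c \<le> sqrt x"
  using real_sqrt_le_mono[of "c^2" x] by simp

lemma fF0: "fF 0 y z = 2 * sqrt ((4+z^2) + y^2) + sqrt ((z-2)^2 + y^2) + sqrt (z^2 + (y-1)^2)"
  unfolding fF_def by (simp add: add_ac)

lemma fF0': "fF 0 y z = 2 * sqrt ((4+y^2) + z^2) + sqrt (y^2 + (z-2)^2) + sqrt ((y-1)^2 + z^2)"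
  unfolding fF_def by (simp add: add_ac)

lemma num1: "fF 0 (1/2) (1/2) < fF 0 0 2"
proof -
  have "fF 0 (1/2) (1/2) = 2 * sqrt (9/2) + sqrt (5/2) + sqrt (1/2)" unfolding fF0' by (simp add: power2_eq_square)
  moreover have "sqrt (9/2) \<le> 21214/10000" by (rule sq_le) (simp_all add: power2_eq_square)
  moreover have "sqrt (5/2) \<le> 15812/10000" by (rule sq_le) (simp_all add: power2_eq_square)
  moreover have "sqrt (1/2) \<le> 7072/10000" by (rule sq_le) (simp_all add: power2_eq_square)
  moreover have "fF 0 0 2 = 2 * sqrt 8 + sqrt 5" unfolding fF0' by (simp add: power2_eq_square)
  moreover have "2828/1000 \<le> sqrt 8" by (rule sq_ge) (simp_all add: power2_eq_square)
  moreover have "2236/1000 \<le> sqrt 5" by (rule sq_ge) (simp_all add: power2_eq_square)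
  ultimately show ?thesis by linarith
qed

lemma num2: "fF 0 (1/2) (1/2) < fF 0 1 0"
proof -
  have "fF 0 (1/2) (1/2) = 2 * sqrt (9/2) + sqrt (5/2) + sqrt (1/2)" unfolding fF0' by (simp add: power2_eq_square)
  moreover have "sqrt (9/2) \<le> 21214/10000" by (rule sq_le) (simp_all add: power2_eq_square)
  moreover have "sqrt (5/2) \<le> 15812/10000" by (rule sq_le) (simp_all add: power2_eq_square)
  moreover have "sqrt (1/2) \<le> 7072/10000" by (rule sq_le) (simp_all add: power2_eq_square)
  moreover have "fF 0 1 0 = 3 * sqrt 5" unfolding fF0' by (simp add: power2_eq_square)
  moreover have "2236/1000 \<le> sqrt 5" by (rule sq_ge) (simp_all add: power2_eq_square)
  ultimately show ?thesis by linarith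
qed

lemma foc:
  assumes min: "\<forall>y' z'. fF 0 y z \<le> fF 0 y' z'"
  shows "pc z = 0"
proof -
  have ne3: "\<not> (y = 0 \<and> z = 2)" using min num1 by (metis not_le order_le_less_trans)
  have ne4: "\<not> (y = 1 \<and> z = 0)" using min num2 by (metis not_le order_le_less_trans)
  define d where "d = sqrt (4 + y^2 + z^2)"
  define D3 where "D3 = sqrt (y^2 + (z-2)^2)"
  define D4 where "D4 = sqrt ((y-1)^2 + z^2)"
  have dpos: "d > 0" unfolding d_def by (simp add: add_pos_nonneg)
  have p3: "y^2 + (z-2)^2 > 0" using ne3 by (simp add: add_pos_nonneg sum_power2_gt_zero_iff)
  have p4: "(y-1)^2 + z^2 > 0" using ne4 by (simp add: sum_power2_gt_zero_iff)
  have D3pos: "D3 > 0" unfolding D3_def using p3 by simp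
  have D4pos: "D4 > 0" unfolding D4_def using p4 by simp
  have hd: "d^2 = 4 + y^2 + z^2" unfolding d_def by (simp add: add_nonneg_nonneg)
  have h3: "D3^2 = y^2 + (z-2)^2" unfolding D3_def using p3 by simp
  have h4: "D4^2 = (y-1)^2 + z^2" unfolding D4_def using p4 by simp
  have dery: "((\<lambda>s. fF 0 (y+s) z) has_real_derivative 2 * (y / d) + y / D3 + (y-1)/D4) (at 0)"
  proof -
    have e: "(\<lambda>s. fF 0 (y+s) z) = (\<lambda>s. 2 * sqrt ((4+z^2) + (y+s)^2) + sqrt ((z-2)^2 + (y+s)^2) + sqrt (z^2 + ((y-1)+s)^2))"
      unfolding fF0 by (simp add: algebra_simps)
    have a: "sqrt ((4+z^2) + y^2) = d" "sqrt ((z-2)^2 + y^2) = D3" "sqrt (z^2 + (y-1)^2) = D4"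
      unfolding d_def D3_def D4_def by (simp_all add: add_ac)
    have D: "((\<lambda>s. 2 * sqrt ((4+z^2) + (y+s)^2) + sqrt ((z-2)^2 + (y+s)^2) + sqrt (z^2 + ((y-1)+s)^2))
       has_real_derivative 2 * (y / sqrt ((4+z^2) + y^2)) + y / sqrt ((z-2)^2 + y^2) + (y-1) / sqrt (z^2 + (y-1)^2)) (at 0)"
      by (intro DERIV_add DERIV_cmult sqrt_deriv) (use p3 p4 in \<open>simp_all add: add_ac add_pos_nonneg\<close>)
    show ?thesis using D unfolding e a .
  qed
  have derz: "((\<lambda>s. fF 0 y (z+s)) has_real_derivative 2 * (z / d) + (z-2) / D3 + z/D4) (at 0)"
  proof -
    have e: "(\<lambda>s. fF 0 y (z+s)) = (\<lambda>s. 2 * sqrt ((4+y^2) + (z+s)^2) + sqrt (y^2 + ((z-2)+s)^2) + sqrt ((y-1)^2 + (z+s)^2))"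
      unfolding fF0' by (simp add: algebra_simps)
    have a: "sqrt ((4+y^2) + z^2) = d" "sqrt (y^2 + (z-2)^2) = D3" "sqrt ((y-1)^2 + z^2) = D4"
      unfolding d_def D3_def D4_def by (simp_all add: add_ac)
    have D: "((\<lambda>s. 2 * sqrt ((4+y^2) + (z+s)^2) + sqrt (y^2 + ((z-2)+s)^2) + sqrt ((y-1)^2 + (z+s)^2))
       has_real_derivative 2 * (z / sqrt ((4+y^2) + z^2)) + (z-2) / sqrt (y^2 + (z-2)^2) + z / sqrt ((y-1)^2 + z^2)) (at 0)"
      by (intro DERIV_add DERIV_cmult sqrt_deriv) (use p3 p4 in \<open>simp_all add: add_ac add_pos_nonneg\<close>)
    show ?thesis using D unfolding e a .
  qed
  have fy0: "2 * (y / d) + y / D3 + (y-1)/D4 = 0"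
    by (rule DERIV_local_min[OF dery, of 1]) (use min in auto)
  have fz0: "2 * (z / d) + (z-2) / D3 + z/D4 = 0"
    by (rule DERIV_local_min[OF derz, of 1]) (use min in auto)
  have "z^3 - 6*z^2 + 13*z - 4 = 0"
    by (rule core[OF dpos D3pos D4pos hd h3 h4]) (use fy0 fz0 in auto)
  thus ?thesis unfolding pc_def .
qed

theorem mainTheorem3:
  shows "\<exists>A1 A2 A3 A4 :: real^3.
           \<not> coplanar {A1, A2, A3, A4} \<and>
           (\<forall>j. A1 $ j \<in> \<rat> \<and> A2 $ j \<in> \<rat> \<and> A3 $ j \<in> \<rat> \<and> A4 $ j \<in> \<rat>) \<and>
           (\<exists>A0. is_FT_point A1 A2 A3 A4 A0 \<and> (\<exists>j. \<not> constructible (A0 $ j)))"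
proof -
  obtain A0 where A0: "\<forall>X. ftot A0 \<le> ftot X" "A0$1 = 0" using exists_min0 by blast
  have min: "\<forall>y' z'. fF 0 (A0$2) (A0$3) \<le> fF 0 y' z'"
  proof (intro allI)
    fix y' z'
    show "fF 0 (A0$2) (A0$3) \<le> fF 0 y' z'"
      using A0(1)[rule_format, of "vector[0,y',z']"] A0(2) unfolding ftot_fF by simp
  qed
  have "pc (A0$3) = 0" by (rule foc[OF min])
  hence nc: "\<not> constructible (A0$3)" using constructible_root no_rat_root by blast
  have ft: "is_FT_point (vector[2,0,0]) (vector[-2,0,0]) (vector[0,0,2]) (vector[0,1,0]) A0"
    using A0(1) unfolding is_FT_point_def ftot_def by simp
  have rat: "\<forall>j. (vector[2,0,0]::real^3) $ j \<in> \<rat> \<and> (vector[-2,0,0]::real^3) $ j \<in> \<rat> \<and>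
      (vector[0,0,2]::real^3) $ j \<in> \<rat> \<and> (vector[0,1,0]::real^3) $ j \<in> \<rat>"
  proof
    fix j :: 3
    show "(vector[2,0,0]::real^3) $ j \<in> \<rat> \<and> (vector[-2,0,0]::real^3) $ j \<in> \<rat> \<and>
      (vector[0,0,2]::real^3) $ j \<in> \<rat> \<and> (vector[0,1,0]::real^3) $ j \<in> \<rat>"
      using exhaust_3[of j] by auto
  qed
  show ?thesis using noncop rat ft nc by blast
qed

end
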